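(* Let $w\in\mathfrak{S}_n$ be Bruhat irreducible and almost reducible at $(J,i)$. Then $s_i$ commutes with every element of $D_L(w)\cap D_R(w)$.
   Context: $\mathfrak{S}_n$ has simple generators $S=\{s_1,\ldots,s_{n-1}\}$, $s_i=(i\ i{+}1)$, length $\ell$. $\supp(x)$ is the set of simple generators in a reduced word of $x$; $D_L(x)=\{s\in S:\ell(sx)<\ell(x)\}$, $D_R(x)=\{s\in S:\ell(xs)<\ell(x)\}$. For $J\subseteq S$, $x=x^Jx_J$ is the parabolic decomposition ($x_J\in W_J=\langle J\rangle$, $x^J$ minimal length in $xW_J$); it is a BP-decomposition if $\supp(x^J)\cap J\subseteq D_L(x_J)$. $w$ is Bruhat irreducible if $\supp(w)=S$ and $w$ is not a product $w'w''$ with $w',w''\ne e$ and $\supp(w')\cap\supp(w'')=\emptyset$. A Bruhat irreducible $w$ is almost reducible at $(J,i)$ if $w=w^Jw_J$ is a BP-decomposition with $\supp(w^J)\cap J=\{s_i\}$ and $s_i\notin D_L(w)\cup D_R(w)$. *)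

theory Defs
  imports "HOL-Combinatorics.Permutations"
begin

text \<open>Products are composition
  (x y = x \<circ> y). Generators are identified with their indices, so subsets
  J of S are subsets of {1..<n}.\<close>

definition sgen :: "nat \<Rightarrow> nat \<Rightarrow> nat" where
  "sgen i = Transposition.transpose i (Suc i)"

definition simple_gens :: "nat \<Rightarrow> nat set" where
  "simple_gens n = {1..<n}"

definition wprod :: "nat list \<Rightarrow> (nat \<Rightarrow> nat)" where
  "wprod ws = foldr (\<lambda>i acc. sgen i \<circ> acc) ws id"

definition len :: "nat \<Rightarrow> (nat \<Rightarrow> nat) \<Rightarrow> nat" where
  "len n w = (LEAST k. \<exists>ws. set ws \<subseteq> simple_gens n \<and> length ws = k \<and> wprod ws = w)"

definition reduced_word :: "nat \<Rightarrow> nat list \<Rightarrow> (nat \<Rightarrow> nat) \<Rightarrow> bool" where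
  "reduced_word n ws w \<longleftrightarrow> set ws \<subseteq> simple_gens n \<and> wprod ws = w \<and> length ws = len n w"

text \<open>Support: generators occurring in a reduced word (independent of the choice).\<close>
definition supp :: "nat \<Rightarrow> (nat \<Rightarrow> nat) \<Rightarrow> nat set" where
  "supp n w = \<Union>{set ws | ws. reduced_word n ws w}"

definition DL :: "nat \<Rightarrow> (nat \<Rightarrow> nat) \<Rightarrow> nat set" where
  "DL n x = {i \<in> simple_gens n. len n (sgen i \<circ> x) < len n x}"

definition DR :: "nat \<Rightarrow> (nat \<Rightarrow> nat) \<Rightarrow> nat set" where
  "DR n x = {i \<in> simple_gens n. len n (x \<circ> sgen i) < len n x}"

definition parabolic :: "nat set \<Rightarrow> (nat \<Rightarrow> nat) set" where
  "parabolic J = {wprod ws | ws. set ws \<subseteq> J}"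

definition parabolic_decomp ::
  "nat \<Rightarrow> nat set \<Rightarrow> (nat \<Rightarrow> nat) \<Rightarrow> (nat \<Rightarrow> nat) \<Rightarrow> (nat \<Rightarrow> nat) \<Rightarrow> bool" where
  "parabolic_decomp n J x u v \<longleftrightarrow>
     v \<in> parabolic J \<and> x = u \<circ> v \<and> (\<forall>y \<in> parabolic J. len n u \<le> len n (x \<circ> y))"

definition BP_decomp ::
  "nat \<Rightarrow> nat set \<Rightarrow> (nat \<Rightarrow> nat) \<Rightarrow> (nat \<Rightarrow> nat) \<Rightarrow> (nat \<Rightarrow> nat) \<Rightarrow> bool" where
  "BP_decomp n J x u v \<longleftrightarrow> parabolic_decomp n J x u v \<and> supp n u \<inter> J \<subseteq> DL n v"

definition bruhat_irreducible :: "nat \<Rightarrow> (nat \<Rightarrow> nat) \<Rightarrow> bool" where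
  "bruhat_irreducible n w \<longleftrightarrow> supp n w = simple_gens n \<and>
     \<not> (\<exists>w1 w2. w1 permutes {1..n} \<and> w2 permutes {1..n} \<and> w1 \<noteq> id \<and> w2 \<noteq> id \<and>
          w = w1 \<circ> w2 \<and> supp n w1 \<inter> supp n w2 = {})"

definition almost_reducible :: "nat \<Rightarrow> (nat \<Rightarrow> nat) \<Rightarrow> nat set \<Rightarrow> nat \<Rightarrow> bool" where
  "almost_reducible n w J i \<longleftrightarrow> bruhat_irreducible n w \<and> J \<subseteq> simple_gens n \<and>
     (\<exists>u v. BP_decomp n J w u v \<and> supp n u \<inter> J = {i}) \<and>
     i \<notin> DL n w \<union> DR n w"

end

theory Submission
  imports Defs
begin


lemma sgen_apply: "sgen i x = (if x = i then Suc i else if x = Suc i then i else x)"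
  by (simp add: sgen_def Transposition.transpose_def)

lemma sgen_invol[simp]: "sgen i \<circ> sgen i = id"
  by (simp add: sgen_def)

lemma sgen_invol'[simp]: "sgen i (sgen i x) = x"
  by (simp add: sgen_apply)

lemma sgen_permutes: "1 \<le> i \<Longrightarrow> i < n \<Longrightarrow> sgen i permutes {1..n}"
  unfolding sgen_def by (rule permutes_swap_id) auto

lemma sgen_invol2[simp]: "sgen i \<circ> (sgen i \<circ> f) = f"
  by (simp add: comp_assoc[symmetric])

lemma inv_sgen[simp]: "inv (sgen i) = sgen i"
  by (simp add: sgen_def)

lemma wprod_Nil[simp]: "wprod [] = id" by (simp add: wprod_def)
lemma wprod_Cons[simp]: "wprod (a # ws) = sgen a \<circ> wprod ws" by (simp add: wprod_def)

lemma wprod_append: "wprod (xs @ ys) = wprod xs \<circ> wprod ys"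
  by (induction xs) (auto simp: comp_assoc)

lemma wprod_permutes: "set ws \<subseteq> {1..<n} \<Longrightarrow> wprod ws permutes {1..n}"
proof (induction ws)
  case Nil then show ?case by (simp only: wprod_Nil permutes_id)
next
  case (Cons a ws)
  then have "sgen a permutes {1..n}" by (intro sgen_permutes) auto
  moreover have "wprod ws permutes {1..n}" using Cons by auto
  ultimately show ?case unfolding wprod_Cons by (rule permutes_compose[rotated])
qed

lemma wprod_rev: "wprod (rev ws) \<circ> wprod ws = id"
proof (induction ws)
  case Nil then show ?case by simp
next
  case (Cons a ws)
  have "wprod (rev (a # ws)) \<circ> wprod (a # ws) = wprod (rev ws) \<circ> (sgen a \<circ> sgen a) \<circ> wprod ws"
    by (simp add: wprod_append comp_assoc)
  also have "\<dots> = id" by (simp only: sgen_invol comp_id Cons.IH)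
  finally show ?case .
qed

definition invs :: "(nat \<Rightarrow> nat) \<Rightarrow> (nat \<times> nat) set" where
  "invs f = {(p, q). p < q \<and> f q < f p}"

lemma invs_id[simp]: "invs id = {}" by (auto simp: invs_def)

lemma perm0: "(y::nat\<Rightarrow>nat) permutes {1..n} \<Longrightarrow> y 0 = 0"
  by (rule permutes_not_in) auto

lemma perm_range: "(y::nat\<Rightarrow>nat) permutes {1..n} \<Longrightarrow> 1 \<le> p \<Longrightarrow> p \<le> n \<Longrightarrow> 1 \<le> y p \<and> y p \<le> n"
  using permutes_in_image[of y "{1..n}" p] by auto

lemma perm_out: "(y::nat\<Rightarrow>nat) permutes {1..n} \<Longrightarrow> n < p \<Longrightarrow> y p = p"
  by (rule permutes_not_in) auto

lemma invs_sub: assumes "(y::nat\<Rightarrow>nat) permutes {1..n}" shows "invs y \<subseteq> {1..n} \<times> {1..n}"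
proof
  fix x assume x: "x \<in> invs y"
  obtain p q where pq: "x = (p, q)" "p < q" "y q < y p" using x unfolding invs_def by auto
  have y0: "y 0 = 0" using perm0[OF assms] .
  have "q \<le> n"
  proof (rule ccontr)
    assume "\<not> q \<le> n"
    then have "y q = q" using perm_out[OF assms] by auto
    moreover have "y p \<le> max p n"
      using perm_range[OF assms, of p] perm_out[OF assms, of p] y0 by (cases "p = 0"; cases "p \<le> n") auto
    ultimately show False using pq \<open>\<not> q \<le> n\<close> by auto
  qed
  moreover have "p \<noteq> 0"
  proof
    assume "p = 0" then have "y q < 0" using pq y0 by simp
    then show False by simp
  qed
  ultimately show "x \<in> {1..n} \<times> {1..n}" using pq by auto
qed

lemma invs_finite: "(y::nat\<Rightarrow>nat) permutes {1..n} \<Longrightarrow> finite (invs y)"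
  using invs_sub finite_subset by blast

lemma step_up:
  assumes y: "(y::nat\<Rightarrow>nat) permutes {1..n}" and a: "1 \<le> a" "a < n" and lt: "inv y a < inv y (Suc a)"
  shows "invs (sgen a \<circ> y) = insert (inv y a, inv y (Suc a)) (invs y)"
    and "(inv y a, inv y (Suc a)) \<notin> invs y"
proof -
  have ya: "y (inv y a) = a" and yb: "y (inv y (Suc a)) = Suc a"
    using permutes_inverses(1)[OF y] by auto
  have inj: "inj y" using permutes_inj[OF y] .
  show "(inv y a, inv y (Suc a)) \<notin> invs y" using ya yb by (auto simp: invs_def)
  show "invs (sgen a \<circ> y) = insert (inv y a, inv y (Suc a)) (invs y)"
  proof (rule set_eqI)
    fix x :: "nat \<times> nat"
    obtain p q where x: "x = (p, q)" by force
    have pa: "y p = a \<longleftrightarrow> p = inv y a" using ya inj by (metis injD)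
    have pb: "y p = Suc a \<longleftrightarrow> p = inv y (Suc a)" using yb inj by (metis injD)
    have qa: "y q = a \<longleftrightarrow> q = inv y a" using ya inj by (metis injD)
    have qb: "y q = Suc a \<longleftrightarrow> q = inv y (Suc a)" using yb inj by (metis injD)
    show "x \<in> invs (sgen a \<circ> y) \<longleftrightarrow> x \<in> insert (inv y a, inv y (Suc a)) (invs y)"
      unfolding x invs_def using lt pa pb qa qb ya yb
      by (auto simp: sgen_apply split: if_splits)
  qed
qed

lemma step_down:
  assumes y: "(y::nat\<Rightarrow>nat) permutes {1..n}" and a: "1 \<le> a" "a < n" and lt: "inv y (Suc a) < inv y a"
  shows "invs (sgen a \<circ> y) = invs y - {(inv y (Suc a), inv y a)}"
    and "(inv y (Suc a), inv y a) \<in> invs y"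
proof -
  have ya: "y (inv y a) = a" and yb: "y (inv y (Suc a)) = Suc a"
    using permutes_inverses(1)[OF y] by auto
  have inj: "inj y" using permutes_inj[OF y] .
  show "(inv y (Suc a), inv y a) \<in> invs y" using ya yb lt by (auto simp: invs_def)
  show "invs (sgen a \<circ> y) = invs y - {(inv y (Suc a), inv y a)}"
  proof (rule set_eqI)
    fix x :: "nat \<times> nat"
    obtain p q where x: "x = (p, q)" by force
    have pa: "y p = a \<longleftrightarrow> p = inv y a" using ya inj by (metis injD)
    have pb: "y p = Suc a \<longleftrightarrow> p = inv y (Suc a)" using yb inj by (metis injD)
    have qa: "y q = a \<longleftrightarrow> q = inv y a" using ya inj by (metis injD)
    have qb: "y q = Suc a \<longleftrightarrow> q = inv y (Suc a)" using yb inj by (metis injD)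
    show "x \<in> invs (sgen a \<circ> y) \<longleftrightarrow> x \<in> invs y - {(inv y (Suc a), inv y a)}"
      unfolding x invs_def using lt pa pb qa qb ya yb
      by (auto simp: sgen_apply split: if_splits)
  qed
qed

lemma inv_ne: assumes y: "(y::nat\<Rightarrow>nat) permutes {1..n}" shows "inv y a \<noteq> inv y (Suc a)"
  by (metis n_not_Suc_n permutes_inverses(1)[OF y])

lemma card_step:
  assumes y: "(y::nat\<Rightarrow>nat) permutes {1..n}" and a: "1 \<le> a" "a < n"
  shows "card (invs (sgen a \<circ> y)) = (if inv y a < inv y (Suc a) then Suc (card (invs y)) else card (invs y) - 1)"
    and "inv y (Suc a) < inv y a \<Longrightarrow> card (invs y) > 0"
proof -
  have fin: "finite (invs y)" using invs_finite[OF y] .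
  show "inv y (Suc a) < inv y a \<Longrightarrow> card (invs y) > 0"
    using step_down(2)[OF y a] fin card_gt_0_iff by blast
  show "card (invs (sgen a \<circ> y)) = (if inv y a < inv y (Suc a) then Suc (card (invs y)) else card (invs y) - 1)"
  proof (cases "inv y a < inv y (Suc a)")
    case True
    then show ?thesis using step_up[OF y a True] fin by simp
  next
    case False
    then have lt: "inv y (Suc a) < inv y a" using inv_ne[OF y, of a] by linarith
    then show ?thesis using step_down[OF y a lt] fin False by simp
  qed
qed

lemma card_le_length: "set ws \<subseteq> {1..<n} \<Longrightarrow> card (invs (wprod ws)) \<le> length ws"
proof (induction ws)
  case Nil then show ?case by (simp only: wprod_Nil invs_id) simp
next
  case (Cons a ws)
  have y: "wprod ws permutes {1..n}" using Cons.prems wprod_permutes by auto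
  have a: "1 \<le> a" "a < n" using Cons.prems by auto
  have 1: "card (invs (sgen a \<circ> wprod ws)) \<le> Suc (card (invs (wprod ws)))"
    using card_step(1)[OF y a] by (simp split: if_splits)
  have 2: "card (invs (wprod ws)) \<le> length ws" using Cons by auto
  show ?case unfolding wprod_Cons length_Cons using 1 2 by linarith
qed

lemma tight_Cons:
  assumes ws: "set (a # ws) \<subseteq> {1..<n}" and t: "card (invs (wprod (a # ws))) = length (a # ws)"
  shows "card (invs (wprod ws)) = length ws" and "invs (wprod ws) \<subseteq> invs (wprod (a # ws))"
    and "inv (wprod ws) a < inv (wprod ws) (Suc a)"
proof -
  have y: "wprod ws permutes {1..n}" using ws wprod_permutes by auto
  have a: "1 \<le> a" "a < n" using ws by auto
  have le: "card (invs (wprod ws)) \<le> length ws" using ws card_le_length by auto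
  show up: "inv (wprod ws) a < inv (wprod ws) (Suc a)"
  proof (rule ccontr)
    assume "\<not> ?thesis"
    then have "card (invs (wprod (a # ws))) = card (invs (wprod ws)) - 1"
      using card_step(1)[OF y a] by simp
    then show False using t le by simp
  qed
  then show "card (invs (wprod ws)) = length ws" using card_step(1)[OF y a] t by simp
  show "invs (wprod ws) \<subseteq> invs (wprod (a # ws))" using step_up(1)[OF y a up] by auto
qed

lemma no_desc_id:
  assumes y: "(y::nat\<Rightarrow>nat) permutes {1..n}" and d: "\<And>a. 1 \<le> a \<Longrightarrow> a < n \<Longrightarrow> y a < y (Suc a)"
  shows "y = id"
proof -
  have up: "m \<le> y m" if "1 \<le> m" "m \<le> n" for m
    using that
  proof (induction m)
    case 0 then show ?case by simp
  next
    case (Suc m)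
    show ?case
    proof (cases "m = 0")
      case True then show ?thesis using perm_range[OF y, of 1] Suc by simp
    next
      case False
      then have "m \<le> y m" using Suc by auto
      moreover have "y m < y (Suc m)" using d[of m] False Suc by auto
      ultimately show ?thesis by simp
    qed
  qed
  have down: "y m \<le> m" if "1 \<le> m" "m \<le> n" for m
    using that
  proof (induction "n - m" arbitrary: m)
    case 0 then show ?case using perm_range[OF y, of m] by simp
  next
    case (Suc k)
    then have "y (Suc m) \<le> Suc m" by simp
    moreover have "y m < y (Suc m)" using d[of m] Suc by simp
    ultimately show ?case by simp
  qed
  show ?thesis
  proof
    fix m
    show "y m = id m"
    proof (cases "1 \<le> m \<and> m \<le> n")
      case True then show ?thesis using up down by (simp add: le_antisym)
    next
      case False then show ?thesis using permutes_not_in[OF y] by auto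
    qed
  qed
qed

lemma desc_exists:
  assumes y: "(y::nat\<Rightarrow>nat) permutes {1..n}" and ne: "y \<noteq> id"
  shows "\<exists>a. 1 \<le> a \<and> a < n \<and> y (Suc a) < y a"
proof (rule ccontr)
  assume "\<not> ?thesis"
  then have "\<And>a. 1 \<le> a \<Longrightarrow> a < n \<Longrightarrow> y a < y (Suc a)"
    using permutes_inj[OF y] by (metis injD linorder_neqE_nat n_not_Suc_n)
  then show False using no_desc_id[OF y] ne by blast
qed

lemma word_exists:
  assumes "(y::nat\<Rightarrow>nat) permutes {1..n}"
  shows "\<exists>ws. set ws \<subseteq> {1..<n} \<and> length ws = card (invs y) \<and> wprod ws = y"
  using assms
proof (induction "card (invs y)" arbitrary: y)
  case 0
  then have "invs y = {}" using invs_finite by auto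
  have "y = id"
  proof (rule no_desc_id[OF 0(2)])
    fix a assume a: "1 \<le> a" "a < n"
    show "y a < y (Suc a)"
    proof (rule ccontr)
      assume "\<not> ?thesis"
      then have "y (Suc a) < y a" using permutes_inj[OF 0(2)] by (metis injD linorder_neqE_nat n_not_Suc_n)
      then have "(a, Suc a) \<in> invs y" by (simp add: invs_def)
      then show False using \<open>invs y = {}\<close> by simp
    qed
  qed
  then show ?case using 0 by (intro exI[of _ "[]"]) simp
next
  case (Suc k)
  have y: "y permutes {1..n}" by fact
  have "y \<noteq> id" using Suc.hyps(2) by auto
  then have "inv y \<noteq> id" by (metis inv_id permutes_inv_inv y)
  then obtain a where a: "1 \<le> a" "a < n" "inv y (Suc a) < inv y a"
    using desc_exists[OF permutes_inv[OF y]] by blast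
  define y' where "y' = sgen a \<circ> y"
  have y': "y' permutes {1..n}" unfolding y'_def using sgen_permutes[OF a(1,2)] y by (rule permutes_compose[rotated])
  have "card (invs y') = k" using card_step(1)[OF y a(1,2)] a(3) Suc.hyps(2) unfolding y'_def by simp
  then obtain ws where ws: "set ws \<subseteq> {1..<n}" "length ws = k" "wprod ws = y'"
    using Suc.hyps(1) y' by blast
  have "wprod (a # ws) = y" using ws(3) unfolding y'_def by simp
  then show ?case using ws a Suc.hyps(2) by (intro exI[of _ "a # ws"]) simp
qed

lemma len_eq:
  assumes y: "(y::nat\<Rightarrow>nat) permutes {1..n}"
  shows "len n y = card (invs y)"
proof -
  obtain ws where ws: "set ws \<subseteq> {1..<n}" "length ws = card (invs y)" "wprod ws = y"
    using word_exists[OF y] by blast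
  show ?thesis unfolding len_def
  proof (rule Least_equality)
    show "\<exists>ws. set ws \<subseteq> simple_gens n \<and> length ws = card (invs y) \<and> wprod ws = y"
      using ws by (auto simp: simple_gens_def)
  next
    fix k assume "\<exists>ws. set ws \<subseteq> simple_gens n \<and> length ws = k \<and> wprod ws = y"
    then obtain vs where "set vs \<subseteq> {1..<n}" "length vs = k" "wprod vs = y"
      by (auto simp: simple_gens_def)
    then show "card (invs y) \<le> k" using card_le_length by blast
  qed
qed



lemma perm_bij: "(y::nat\<Rightarrow>nat) permutes {1..n} \<Longrightarrow> bij y"
  by (rule permutes_bij)

lemma card_invs_inv:
  assumes y: "(y::nat\<Rightarrow>nat) permutes {1..n}"
  shows "card (invs (inv y)) = card (invs y)"
proof -
  have inj: "inj y" using permutes_inj[OF y] .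
  have yi: "\<And>x. y (inv y x) = x" "\<And>x. inv y (y x) = x" using permutes_inverses[OF y] by auto
  have eq: "invs (inv y) = (\<lambda>(p, q). (y q, y p)) ` invs y"
  proof (rule set_eqI)
    fix x :: "nat \<times> nat"
    obtain a b where x: "x = (a, b)" by force
    show "x \<in> invs (inv y) \<longleftrightarrow> x \<in> (\<lambda>(p, q). (y q, y p)) ` invs y"
    proof
      assume "x \<in> invs (inv y)"
      then have ab: "a < b" "inv y b < inv y a" using x by (auto simp: invs_def)
      then have "(inv y b, inv y a) \<in> invs y" using yi by (auto simp: invs_def)
      moreover have "x = (\<lambda>(p, q). (y q, y p)) (inv y b, inv y a)" using x yi by simp
      ultimately show "x \<in> (\<lambda>(p, q). (y q, y p)) ` invs y" by blast
    next
      assume "x \<in> (\<lambda>(p, q). (y q, y p)) ` invs y"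
      then obtain p q where "(p, q) \<in> invs y" "x = (y q, y p)" by auto
      then show "x \<in> invs (inv y)" using yi by (auto simp: invs_def)
    qed
  qed
  have "inj_on (\<lambda>(p, q). (y q, y p)) (invs y)"
  proof (rule inj_onI)
    fix a b assume "a \<in> invs y" "b \<in> invs y" "(\<lambda>(p, q). (y q, y p)) a = (\<lambda>(p, q). (y q, y p)) b"
    then show "a = b" using inj by (cases a; cases b) (simp add: inj_eq)
  qed
  then have "card ((\<lambda>(p, q). (y q, y p)) ` invs y) = card (invs y)" by (rule card_image)
  then show ?thesis using eq by simp
qed

lemma DL_char:
  assumes y: "(y::nat\<Rightarrow>nat) permutes {1..n}" and k: "1 \<le> k" "k < n"
  shows "len n (sgen k \<circ> y) < len n y \<longleftrightarrow> inv y (Suc k) < inv y k"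
proof -
  have y': "sgen k \<circ> y permutes {1..n}" using sgen_permutes[OF k] y by (rule permutes_compose[rotated])
  show ?thesis
    unfolding len_eq[OF y] len_eq[OF y'] card_step(1)[OF y k]
    using card_step(2)[OF y k] inv_ne[OF y, of k] by auto
qed

lemma DR_char:
  assumes y: "(y::nat\<Rightarrow>nat) permutes {1..n}" and k: "1 \<le> k" "k < n"
  shows "len n (y \<circ> sgen k) < len n y \<longleftrightarrow> y (Suc k) < y k"
proof -
  have s: "sgen k permutes {1..n}" using sgen_permutes[OF k] .
  have y': "y \<circ> sgen k permutes {1..n}" using y s by (rule permutes_compose[rotated])
  have yi: "inv y permutes {1..n}" using permutes_inv[OF y] .
  have e: "inv (y \<circ> sgen k) = sgen k \<circ> inv y"
    using o_inv_distrib[OF perm_bij[OF y] perm_bij[OF s]] by simp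
  have ii: "inv (inv y) = y" using inv_inv_eq[OF perm_bij[OF y]] .
  have "len n (y \<circ> sgen k) = card (invs (sgen k \<circ> inv y))"
    using len_eq[OF y'] card_invs_inv[OF y'] e by simp
  moreover have "len n y = card (invs (inv y))" using len_eq[OF y] card_invs_inv[OF y] by simp
  ultimately show ?thesis
    using card_step(1)[OF yi k] card_step(2)[OF yi k] inv_ne[OF yi, of k] unfolding ii by auto
qed

definition pres :: "(nat \<Rightarrow> nat) \<Rightarrow> nat \<Rightarrow> bool" where
  "pres f k \<longleftrightarrow> f ` {1..k} = {1..k}"

lemma pres_sgen: "m \<noteq> k \<Longrightarrow> 1 \<le> m \<Longrightarrow> pres (sgen m) k"
  unfolding pres_def sgen_def by (rule transpose_image_eq) auto

lemma pres_comp: "pres f k \<Longrightarrow> pres g k \<Longrightarrow> pres (f \<circ> g) k"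
  unfolding pres_def image_comp[symmetric] by simp

lemma pres_id: "pres id k" by (simp add: pres_def)

lemma pres_word: "set ws \<subseteq> {1..<n} \<Longrightarrow> k \<notin> set ws \<Longrightarrow> pres (wprod ws) k"
proof (induction ws)
  case Nil then show ?case by (simp only: wprod_Nil pres_id)
next
  case (Cons a ws)
  then have "pres (sgen a) k" "pres (wprod ws) k" by (auto intro: pres_sgen)
  then show ?case unfolding wprod_Cons by (rule pres_comp)
qed

lemma pres_iff:
  assumes x: "(x::nat\<Rightarrow>nat) permutes {1..n}" and k: "k \<le> n" and p: "pres x k" and m: "1 \<le> m"
  shows "x m \<le> k \<longleftrightarrow> m \<le> k"
proof
  assume "m \<le> k"
  then have "x m \<in> x ` {1..k}" using m by auto
  then show "x m \<le> k" using p by (simp add: pres_def)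
next
  assume a: "x m \<le> k"
  show "m \<le> k"
  proof (rule ccontr)
    assume b: "\<not> m \<le> k"
    show False
    proof (cases "m \<le> n")
      case True
      then have "1 \<le> x m" using perm_range[OF x m] by simp
      then have "x m \<in> x ` {1..k}" using a p by (simp add: pres_def)
      then obtain m' where "m' \<in> {1..k}" "x m' = x m" by auto
      then show False using b permutes_inj[OF x] by (metis atLeastAtMost_iff injD)
    next
      case False
      then show False using perm_out[OF x, of m] a b by simp
    qed
  qed
qed

lemma cross_word:
  assumes ws: "set ws \<subseteq> {1..<n}" and t: "card (invs (wprod ws)) = length ws" and k: "k \<in> set ws"
  shows "\<exists>p q. (p, q) \<in> invs (wprod ws) \<and> p \<le> k \<and> k < q"
  using ws t k
proof (induction ws)
  case Nil then show ?case by simp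
next
  case (Cons a ws)
  note tc = tight_Cons[OF Cons.prems(1,2)]
  show ?case
  proof (cases "k \<in> set ws")
    case True
    then show ?thesis using Cons.IH Cons.prems tc by fastforce
  next
    case False
    then have ka: "k = a" using Cons.prems by simp
    have y: "wprod ws permutes {1..n}" using Cons.prems wprod_permutes by auto
    have kn: "1 \<le> k" "k < n" using Cons.prems ka by auto
    have pr: "pres (wprod ws) k" using pres_word[of ws n k] False Cons.prems by auto
    define p where "p = inv (wprod ws) k"
    define q where "q = inv (wprod ws) (Suc k)"
    have yp: "wprod ws p = k" and yq: "wprod ws q = Suc k"
      unfolding p_def q_def using permutes_inverses(1)[OF y] by auto
    have "q \<noteq> 0"
    proof
      assume "q = 0" then have "wprod ws 0 = Suc k" using yq by simp
      then show False using perm0[OF y] by simp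
    qed
    then have "\<not> q \<le> k" using pres_iff[OF y _ pr, of q] yq kn by auto
    moreover have "p \<noteq> 0"
    proof
      assume "p = 0" then have "wprod ws 0 = k" using yp by simp
      then show False using perm0[OF y] kn by simp
    qed
    then have "p \<le> k" using pres_iff[OF y _ pr, of p] yp kn by auto
    moreover have "(p, q) \<in> invs (wprod (a # ws))"
      using yp yq ka \<open>p \<le> k\<close> \<open>\<not> q \<le> k\<close> by (simp add: invs_def sgen_apply)
    ultimately show ?thesis by (metis not_le)
  qed
qed

lemma cross_not_pres:
  assumes x: "(x::nat\<Rightarrow>nat) permutes {1..n}" and pq: "(p, q) \<in> invs x" "p \<le> k" "k < q" and k: "k \<le> n"
  shows "\<not> pres x k"
proof
  assume pr: "pres x k"
  have lt: "p < q" "x q < x p" using pq by (auto simp: invs_def)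
  have "p \<noteq> 0" using lt perm0[OF x] by (metis not_less0)
  then have "x p \<le> k" using pres_iff[OF x k pr, of p] pq by simp
  moreover have "\<not> x q \<le> k" using pres_iff[OF x k pr, of q] pq by simp
  ultimately show False using lt by simp
qed

lemma supp_char:
  assumes x: "(x::nat\<Rightarrow>nat) permutes {1..n}"
  shows "supp n x = {k. 1 \<le> k \<and> k < n \<and> \<not> pres x k}"
proof (rule set_eqI, rule iffI)
  fix k assume "k \<in> supp n x"
  then obtain ws where ws: "reduced_word n ws x" "k \<in> set ws" unfolding supp_def by auto
  have s: "set ws \<subseteq> {1..<n}" "wprod ws = x" "length ws = len n x"
    using ws(1) by (auto simp: reduced_word_def simple_gens_def)
  then have t: "card (invs (wprod ws)) = length ws" using len_eq[OF x] by simp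
  have kn: "1 \<le> k" "k < n" using s ws by auto
  obtain p q where "(p, q) \<in> invs (wprod ws)" "p \<le> k" "k < q" using cross_word[OF s(1) t ws(2)] by blast
  then have "\<not> pres x k" using cross_not_pres[OF x] s kn by auto
  then show "k \<in> {k. 1 \<le> k \<and> k < n \<and> \<not> pres x k}" using kn by simp
next
  fix k assume "k \<in> {k. 1 \<le> k \<and> k < n \<and> \<not> pres x k}"
  then have k: "1 \<le> k" "k < n" "\<not> pres x k" by auto
  obtain ws where ws: "set ws \<subseteq> {1..<n}" "length ws = card (invs x)" "wprod ws = x"
    using word_exists[OF x] by blast
  have r: "reduced_word n ws x" using ws len_eq[OF x] by (auto simp: reduced_word_def simple_gens_def)
  have "k \<in> set ws" using pres_word[OF ws(1), of k] ws(3) k by auto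
  then show "k \<in> supp n x" using r unfolding supp_def by blast
qed

lemma pres_inv:
  assumes x: "(x::nat\<Rightarrow>nat) permutes {1..n}" and p: "pres x k"
  shows "pres (inv x) k"
  using p permutes_inj[OF x] unfolding pres_def by (metis image_inv_f_f)

lemma pres_inv_iff:
  assumes x: "(x::nat\<Rightarrow>nat) permutes {1..n}"
  shows "pres (inv x) k \<longleftrightarrow> pres x k"
  using pres_inv[OF x] pres_inv[OF permutes_inv[OF x]] inv_inv_eq[OF perm_bij[OF x]] by metis

lemma supp_inv:
  assumes x: "(x::nat\<Rightarrow>nat) permutes {1..n}"
  shows "supp n (inv x) = supp n x"
  using supp_char[OF x] supp_char[OF permutes_inv[OF x]] pres_inv_iff[OF x] by simp



lemma pos: "(x::nat\<Rightarrow>nat) permutes {1..n} \<Longrightarrow> 1 \<le> m \<Longrightarrow> 1 \<le> x m"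
  using perm_range[of x n m] perm_out[of x n m] by (cases "m \<le> n") auto

lemma inv_pos: "(x::nat\<Rightarrow>nat) permutes {1..n} \<Longrightarrow> 1 \<le> m \<Longrightarrow> 1 \<le> inv x m"
  using pos[OF permutes_inv] by blast

lemma decomp_facts:
  assumes w: "(w::nat\<Rightarrow>nat) permutes {1..n}" and J: "J \<subseteq> simple_gens n"
    and d: "parabolic_decomp n J w u v"
  shows "u permutes {1..n}" "v permutes {1..n}" "w = u \<circ> v"
    "\<And>k. k \<in> J \<Longrightarrow> u k < u (Suc k)" "\<And>k. k \<notin> J \<Longrightarrow> pres v k"
proof -
  have vJ: "v \<in> parabolic J" and wuv: "w = u \<circ> v" and mn: "\<forall>y \<in> parabolic J. len n u \<le> len n (w \<circ> y)"
    using d by (auto simp: parabolic_decomp_def)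
  obtain ws where ws: "set ws \<subseteq> J" "v = wprod ws" using vJ by (auto simp: parabolic_def)
  have wsn: "set ws \<subseteq> {1..<n}" using ws J by (auto simp: simple_gens_def)
  show vp: "v permutes {1..n}" using wprod_permutes[OF wsn] ws by simp
  show "w = u \<circ> v" by fact
  define vi where "vi = wprod (rev ws)"
  have vvi: "v \<circ> vi = id" unfolding vi_def ws(2) using wprod_rev[of "rev ws"] by simp
  have uw: "u = w \<circ> vi" using wuv vvi by (metis comp_assoc comp_id)
  have vip: "vi permutes {1..n}" unfolding vi_def using wprod_permutes[of "rev ws" n] wsn by simp
  show up: "u permutes {1..n}" using uw w vip by (metis permutes_compose)
  show "pres v k" if "k \<notin> J" for k
    using pres_word[OF wsn, of k] that ws by auto
  show "u k < u (Suc k)" if k: "k \<in> J" for k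
  proof -
    have kn: "1 \<le> k" "k < n" using k J by (auto simp: simple_gens_def)
    have "set (rev ws @ [k]) \<subseteq> J" using ws k by auto
    then have "wprod (rev ws @ [k]) \<in> parabolic J" unfolding parabolic_def by blast
    moreover have "wprod (rev ws @ [k]) = vi \<circ> sgen k" unfolding vi_def wprod_append by simp
    ultimately have "len n u \<le> len n (w \<circ> (vi \<circ> sgen k))" using mn by metis
    then have "len n u \<le> len n (u \<circ> sgen k)" using uw by (simp add: comp_assoc)
    then have "\<not> u (Suc k) < u k" using DR_char[OF up kn] by simp
    moreover have "u k \<noteq> u (Suc k)" using permutes_inj[OF up] by (metis injD n_not_Suc_n)
    ultimately show ?thesis by simp
  qed
qed

lemma reducible:
  assumes x: "(x::nat\<Rightarrow>nat) permutes {1..n}" and i: "2 \<le> i" "i < n"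
    and h: "\<And>P. 1 \<le> P \<Longrightarrow> P \<le> n \<Longrightarrow> x P < i \<Longrightarrow> P \<le> i"
    and s: "supp n x = simple_gens n"
  shows "\<exists>x1 x2. x1 permutes {1..n} \<and> x2 permutes {1..n} \<and> x1 \<noteq> id \<and> x2 \<noteq> id \<and>
          x = x1 \<circ> x2 \<and> supp n x1 \<inter> supp n x2 = {}"
proof -
  define x2 where "x2 = (\<lambda>P. if P \<in> {1..i} then min (x P) i else P)"
  have img: "x2 ` {1..i} \<subseteq> {1..i}"
  proof
    fix y assume "y \<in> x2 ` {1..i}"
    then obtain P where P: "P \<in> {1..i}" "y = x2 P" by auto
    then show "y \<in> {1..i}" using pos[OF x, of P] unfolding x2_def by auto
  qed
  have inj: "inj_on x2 {1..i}"
  proof (rule inj_onI, rule ccontr)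
    fix P P' assume P: "P \<in> {1..i}" "P' \<in> {1..i}" "x2 P = x2 P'" "P \<noteq> P'"
    have "x P \<noteq> x P'" using P(4) permutes_inj[OF x] by (metis injD)
    have mm: "min (x P) i = min (x P') i" using P(1,2,3) unfolding x2_def by simp
    have ge: "i \<le> x P" "i \<le> x P'" using mm \<open>x P \<noteq> x P'\<close> by linarith+
    have sub: "{1..i-1} \<subseteq> x ` ({1..i} - {P, P'})"
    proof
      fix m assume m: "m \<in> {1..i-1}"
      define Q where "Q = inv x m"
      have xQ: "x Q = m" unfolding Q_def using permutes_inverses(1)[OF x] by simp
      have Q1: "1 \<le> Q" unfolding Q_def using inv_pos[OF x] m by auto
      have Qn: "Q \<le> n" unfolding Q_def using perm_range[OF permutes_inv[OF x], of m] m i by auto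
      have "Q \<le> i" using h[OF Q1 Qn] xQ m by auto
      moreover have "Q \<noteq> P" "Q \<noteq> P'" using xQ ge m by auto
      ultimately show "m \<in> x ` ({1..i} - {P, P'})" using Q1 xQ by force
    qed
    have "card {1..i-1} \<le> card (x ` ({1..i} - {P, P'}))" using sub by (intro card_mono) auto
    also have "\<dots> \<le> card ({1..i} - {P, P'})" by (rule card_image_le) auto
    also have "\<dots> = i - 2" using P by (simp add: card_Diff_subset)
    finally show False using i by simp
  qed
  have eq: "x2 ` {1..i} = {1..i}" using endo_inj_surj[OF _ img inj] by simp
  have x2i: "x2 permutes {1..i}"
  proof (rule bij_imp_permutes)
    show "bij_betw x2 {1..i} {1..i}" using inj eq by (simp add: bij_betw_def)
    show "x2 y = y" if "y \<notin> {1..i}" for y using that unfolding x2_def by (simp only: if_False)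
  qed
  have x2p: "x2 permutes {1..n}" using permutes_subset[OF x2i] i by auto
  define x1 where "x1 = x \<circ> inv x2"
  have x1p: "x1 permutes {1..n}" unfolding x1_def using permutes_inv[OF x2p] x by (rule permutes_compose)
  have xe: "x = x1 \<circ> x2" unfolding x1_def using permutes_inv_o(2)[OF x2p] by (simp add: comp_assoc)
  have fix1: "x1 m = m" if m: "1 \<le> m" "m < i" for m
  proof -
    define P where "P = inv x2 m"
    have P: "P \<in> {1..i}" unfolding P_def using permutes_in_image[OF permutes_inv[OF x2i]] m by auto
    have "x2 P = m" unfolding P_def using permutes_inverses(1)[OF x2i] by simp
    then have "x P = m" using P m unfolding x2_def by (auto simp: min_def split: if_splits)
    then show ?thesis unfolding x1_def P_def by simp
  qed
  have pres1: "pres x1 k" if "k < i" for k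
  proof -
    have "x1 ` {1..k} = {1..k}" using fix1 that by (auto intro!: image_eqI)
    then show ?thesis by (simp add: pres_def)
  qed
  have pres2: "pres x2 k" if "i \<le> k" for k
    using permutes_image[OF permutes_subset[OF x2i]] that unfolding pres_def by auto
  have s1: "supp n x1 \<subseteq> {i..}" using supp_char[OF x1p] pres1 by (auto simp: not_le[symmetric])
  have s2: "supp n x2 \<subseteq> {..<i}" using supp_char[OF x2p] pres2 by (auto simp: not_le[symmetric])
  have d: "supp n x1 \<inter> supp n x2 = {}"
  proof (rule ccontr)
    assume "supp n x1 \<inter> supp n x2 \<noteq> {}"
    then obtain k where "k \<in> supp n x1" "k \<in> supp n x2" by blast
    then have "i \<le> k" "k < i" using s1 s2 by auto
    then show False by simp
  qed
  have n1: "x1 \<noteq> id"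
  proof
    assume "x1 = id"
    then have "x = x2" using xe by simp
    then have "i \<in> supp n x2" using s i by (simp add: simple_gens_def)
    then show False using s2 by auto
  qed
  have n2: "x2 \<noteq> id"
  proof
    assume "x2 = id"
    then have "x = x1" using xe by simp
    then have "1 \<in> supp n x1" using s i by (simp add: simple_gens_def)
    then show False using s1 i by auto
  qed
  show ?thesis using x1p x2p n1 n2 xe d by blast
qed

lemma reducible2:
  assumes w: "(w::nat\<Rightarrow>nat) permutes {1..n}" and i: "1 \<le> i" "Suc (Suc i) \<le> n"
    and h: "\<And>P. 1 \<le> P \<Longrightarrow> P \<le> i \<Longrightarrow> w P \<le> Suc i"
    and s: "supp n w = simple_gens n"
  shows "\<exists>w1 w2. w1 permutes {1..n} \<and> w2 permutes {1..n} \<and> w1 \<noteq> id \<and> w2 \<noteq> id \<and>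
          w = w1 \<circ> w2 \<and> supp n w1 \<inter> supp n w2 = {}"
proof -
  have wi: "inv w permutes {1..n}" using permutes_inv[OF w] .
  have h': "P \<le> Suc i" if "1 \<le> P" "P \<le> n" "inv w P < Suc i" for P
  proof -
    have "1 \<le> inv w P" using inv_pos[OF w] that by auto
    then have "w (inv w P) \<le> Suc i" using h that by auto
    then show ?thesis using permutes_inverses(1)[OF w] by simp
  qed
  have s': "supp n (inv w) = simple_gens n" using supp_inv[OF w] s by simp
  obtain x1 x2 where xs: "x1 permutes {1..n}" "x2 permutes {1..n}" "x1 \<noteq> id" "x2 \<noteq> id"
    "inv w = x1 \<circ> x2" "supp n x1 \<inter> supp n x2 = {}"
    using reducible[OF wi _ _ h' s'] i by auto
  have "w = inv (inv w)" using inv_inv_eq[OF perm_bij[OF w]] by simp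
  also have "\<dots> = inv x2 \<circ> inv x1" using xs(5) o_inv_distrib[OF perm_bij[OF xs(1)] perm_bij[OF xs(2)]] by simp
  finally have we: "w = inv x2 \<circ> inv x1" .
  have "inv x2 \<noteq> id" using xs(4) inv_inv_eq[OF perm_bij[OF xs(2)]] by (metis inv_id)
  moreover have "inv x1 \<noteq> id" using xs(3) inv_inv_eq[OF perm_bij[OF xs(1)]] by (metis inv_id)
  moreover have "supp n (inv x2) \<inter> supp n (inv x1) = {}"
    using xs(6) supp_inv[OF xs(1)] supp_inv[OF xs(2)] by auto
  ultimately show ?thesis using we permutes_inv[OF xs(1)] permutes_inv[OF xs(2)] by blast
qed

lemma sgen_commute: "Suc i < j \<or> Suc j < i \<Longrightarrow> sgen i \<circ> sgen j = sgen j \<circ> sgen i"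
  by (rule ext) (auto simp: sgen_apply)



lemma pres_step:
  assumes u: "(u::nat\<Rightarrow>nat) permutes {1..n}" and i: "1 \<le> i" and p: "pres u (i - 1)" and ui: "u i = i"
  shows "pres u i"
proof -
  have e: "{1..i} = insert i {1..i - 1}" using i by auto
  show ?thesis using p ui unfolding pres_def e by simp
qed

lemma pres_down:
  assumes u: "(u::nat\<Rightarrow>nat) permutes {1..n}" and p: "pres u (Suc k)" and uk: "u (Suc k) = Suc k"
  shows "pres u k"
proof -
  have e: "{1..k} = {1..Suc k} - {Suc k}" by auto
  have "u ` ({1..Suc k} - {Suc k}) = u ` {1..Suc k} - u ` {Suc k}"
    using permutes_inj[OF u] by (simp add: image_set_diff)
  then show ?thesis using p uk unfolding pres_def e by simp
qed

lemma caseA: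
  assumes u: "(u::nat\<Rightarrow>nat) permutes {1..n}" and v: "(v::nat\<Rightarrow>nat) permutes {1..n}"
    and wuv: "w = u \<circ> v" and i: "1 \<le> i" "i < n"
    and pv1: "pres v (i - 1)" and pv2: "pres v (Suc i)" and um: "u i < u (Suc i)"
    and dv: "inv v (Suc i) < inv v i" and rw: "\<not> w (Suc i) < w i"
  shows False
proof -
  have a1: "\<not> v i \<le> i - 1" using pres_iff[OF v _ pv1, of i] i by auto
  have a2: "v i \<le> Suc i" using pres_iff[OF v _ pv2, of i] i by auto
  have b1: "\<not> v (Suc i) \<le> i - 1" using pres_iff[OF v _ pv1, of "Suc i"] i by auto
  have b2: "v (Suc i) \<le> Suc i" using pres_iff[OF v _ pv2, of "Suc i"] i by auto
  have ne: "v i \<noteq> v (Suc i)" using permutes_inj[OF v] by (metis injD n_not_Suc_n)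
  have iv: "\<And>x. inv v (v x) = x" using permutes_inverses(2)[OF v] by simp
  show False
  proof (cases "v i = i")
    case True
    then have "v (Suc i) = Suc i" using b1 b2 ne by auto
    then have "inv v i = i" "inv v (Suc i) = Suc i" using True iv by metis+
    then show False using dv by simp
  next
    case False
    then have "v i = Suc i" "v (Suc i) = i" using a1 a2 b1 b2 ne by auto
    then have "w i = u (Suc i)" "w (Suc i) = u i" using wuv by auto
    then show False using um rw by simp
  qed
qed

lemma caseB:
  assumes u: "(u::nat\<Rightarrow>nat) permutes {1..n}" and i: "2 \<le> i" "Suc i < n"
    and p1: "pres u (i - 1)" and p2: "pres u (Suc i)" and um: "u i < u (Suc i)"
  shows "pres u i"
proof -
  have "\<not> u i \<le> i - 1" using pres_iff[OF u _ p1, of i] i by auto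
  moreover have "u (Suc i) \<le> Suc i" using pres_iff[OF u _ p2, of "Suc i"] i by auto
  ultimately have "u i = i" using um by auto
  then show ?thesis using pres_step[OF u _ p1] i by auto
qed

lemma caseC:
  assumes u: "(u::nat\<Rightarrow>nat) permutes {1..n}" and v: "(v::nat\<Rightarrow>nat) permutes {1..n}"
    and w: "(w::nat\<Rightarrow>nat) permutes {1..n}"
    and wuv: "w = u \<circ> v" and i: "1 \<le> i" "Suc (Suc i) \<le> n"
    and pu: "pres u (Suc i)" and pv: "pres v (i - 1)" and npu: "\<not> pres u i"
    and um: "u i < u (Suc i)" and dl: "inv w (Suc (Suc i)) < inv w (Suc i)"
  shows False
proof -
  define P where "P = inv w (Suc i)"
  define Q where "Q = inv w (Suc (Suc i))"
  have wP: "u (v P) = Suc i" unfolding P_def using permutes_inverses(1)[OF w] wuv by (metis comp_apply)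
  have wQ: "u (v Q) = Suc (Suc i)" unfolding Q_def using permutes_inverses(1)[OF w] wuv by (metis comp_apply)
  have P1: "1 \<le> P" "1 \<le> v P" unfolding P_def using inv_pos[OF w] pos[OF v] by auto
  have Q1: "1 \<le> Q" "1 \<le> v Q" unfolding Q_def using inv_pos[OF w] pos[OF v] by auto
  have "v P \<le> Suc i" using pres_iff[OF u _ pu, of "v P"] wP P1 i by auto
  moreover have "v P \<noteq> Suc i"
  proof
    assume "v P = Suc i"
    then have "u (Suc i) = Suc i" using wP by simp
    then show False using pres_down[OF u pu] npu by simp
  qed
  moreover have "v P \<noteq> i"
  proof
    assume "v P = i"
    then have "u i = Suc i" using wP by simp
    moreover have "u (Suc i) \<le> Suc i" using pres_iff[OF u _ pu, of "Suc i"] i by auto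
    ultimately show False using um by simp
  qed
  ultimately have "v P \<le> i - 1" by auto
  then have Pl: "P \<le> i - 1" using pres_iff[OF v _ pv, of P] P1 i by auto
  have "\<not> v Q \<le> Suc i" using pres_iff[OF u _ pu, of "v Q"] wQ Q1 i by auto
  then have "\<not> v Q \<le> i - 1" by auto
  then have "\<not> Q \<le> i - 1" using pres_iff[OF v _ pv, of Q] Q1 i by auto
  then show False using Pl dl unfolding P_def Q_def by simp
qed

lemma caseD:
  assumes u: "(u::nat\<Rightarrow>nat) permutes {1..n}" and v: "(v::nat\<Rightarrow>nat) permutes {1..n}"
    and wuv: "w = u \<circ> v" and i: "2 \<le> i" "Suc (Suc i) \<le> n"
    and pu: "pres u (Suc i)" and pv: "pres v (i - 1)" and dr: "w i < w (i - 1)"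
  shows "\<And>P. 1 \<le> P \<Longrightarrow> P \<le> i \<Longrightarrow> w P \<le> Suc i"
proof -
  have small: "w P \<le> Suc i" if "1 \<le> P" "P \<le> i - 1" for P
  proof -
    have "v P \<le> i - 1" using pres_iff[OF v _ pv, of P] that i by auto
    then have "u (v P) \<le> Suc i" using pres_iff[OF u _ pu, of "v P"] pos[OF v, of P] that i by auto
    then show ?thesis using wuv by simp
  qed
  fix P assume P: "1 \<le> P" "P \<le> i"
  show "w P \<le> Suc i"
  proof (cases "P = i")
    case True
    have "w (i - 1) \<le> Suc i" using small[of "i - 1"] i by auto
    then show ?thesis using True dr by simp
  next
    case False
    then show ?thesis using small P by auto
  qed
qed

lemma caseE:
  assumes u: "(u::nat\<Rightarrow>nat) permutes {1..n}" and v: "(v::nat\<Rightarrow>nat) permutes {1..n}"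
    and w: "(w::nat\<Rightarrow>nat) permutes {1..n}"
    and wuv: "w = u \<circ> v" and i: "2 \<le> i" "Suc (Suc i) \<le> n"
    and pu: "pres u (i - 1)" and pv: "pres v (Suc i)" and dr: "w (Suc (Suc i)) < w (Suc i)"
  shows "\<And>P. 1 \<le> P \<Longrightarrow> P \<le> n \<Longrightarrow> w P < i \<Longrightarrow> P \<le> i"
proof -
  have "\<not> v (Suc (Suc i)) \<le> Suc i" using pres_iff[OF v _ pv, of "Suc (Suc i)"] i by auto
  then have "\<not> v (Suc (Suc i)) \<le> i - 1" by auto
  then have "\<not> u (v (Suc (Suc i))) \<le> i - 1"
    using pres_iff[OF u _ pu, of "v (Suc (Suc i))"] pos[OF v, of "Suc (Suc i)"] i by auto
  then have big: "Suc i \<le> w (Suc i)" using dr wuv by auto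
  fix P assume P: "1 \<le> P" "P \<le> n" "w P < i"
  then have "u (v P) \<le> i - 1" using wuv by auto
  then have "v P \<le> i - 1" using pres_iff[OF u _ pu, of "v P"] pos[OF v, of P] P i by auto
  then have "v P \<le> Suc i" by simp
  then have "P \<le> Suc i" using pres_iff[OF v _ pv, of P] P i by auto
  moreover have "P \<noteq> Suc i" using big P by auto
  ultimately show "P \<le> i" by simp
qed

lemma caseF:
  assumes u: "(u::nat\<Rightarrow>nat) permutes {1..n}" and v: "(v::nat\<Rightarrow>nat) permutes {1..n}"
    and w: "(w::nat\<Rightarrow>nat) permutes {1..n}"
    and wuv: "w = u \<circ> v" and i: "2 \<le> i" "Suc i \<le> n"
    and pu: "pres u (i - 1)" and pv: "pres v (Suc i)" and npu: "\<not> pres u i"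
    and um: "u i < u (Suc i)" and dl: "inv w i < inv w (i - 1)"
  shows False
proof -
  have "\<not> u i \<le> i - 1" using pres_iff[OF u _ pu, of i] i by auto
  moreover have "u i \<noteq> i" using pres_step[OF u _ pu] npu i by auto
  ultimately have ui: "Suc i \<le> u i" by auto
  define P where "P = inv w i"
  define Q where "Q = inv w (i - 1)"
  have wP: "u (v P) = i" unfolding P_def using permutes_inverses(1)[OF w] wuv by (metis comp_apply)
  have wQ: "u (v Q) = i - 1" unfolding Q_def using permutes_inverses(1)[OF w] wuv by (metis comp_apply)
  have P1: "1 \<le> P" "1 \<le> v P" unfolding P_def using inv_pos[OF w] pos[OF v] i by auto
  have Q1: "1 \<le> Q" "1 \<le> v Q" unfolding Q_def using inv_pos[OF w] pos[OF v] i by auto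
  have kn: "i - 1 \<le> n" using i by simp
  have h: "u (v P) \<le> i - 1 \<longleftrightarrow> v P \<le> i - 1" using pres_iff[OF u kn pu P1(2)] .
  have "\<not> v P \<le> i - 1" using h wP i by linarith
  moreover have "v P \<noteq> i" using wP ui by auto
  moreover have "v P \<noteq> Suc i" using wP ui um by auto
  ultimately have "\<not> v P \<le> Suc i" by auto
  then have Pb: "\<not> P \<le> Suc i" using pres_iff[OF v _ pv, of P] P1 i by auto
  have "v Q \<le> i - 1" using pres_iff[OF u _ pu, of "v Q"] wQ Q1 i by auto
  then have "v Q \<le> Suc i" by simp
  then have "Q \<le> Suc i" using pres_iff[OF v _ pv, of Q] Q1 i by auto
  then show False using Pb dl unfolding P_def Q_def by simp
qed



theorem corollary5p5:
  fixes n :: nat and w :: "nat \<Rightarrow> nat" and J :: "nat set" and i :: nat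
  assumes "w permutes {1..n}"
    and "bruhat_irreducible n w"
    and "almost_reducible n w J i"
  shows "\<forall>j \<in> DL n w \<inter> DR n w. sgen i \<circ> sgen j = sgen j \<circ> sgen i"
proof -
  have w: "w permutes {1..n}" by fact
  from assms(3) obtain u v where J: "J \<subseteq> simple_gens n" and bp: "BP_decomp n J w u v"
    and sJ: "supp n u \<inter> J = {i}" and nd: "i \<notin> DL n w \<union> DR n w"
    unfolding almost_reducible_def by blast
  have pd: "parabolic_decomp n J w u v" and bpc: "supp n u \<inter> J \<subseteq> DL n v"
    using bp by (auto simp: BP_decomp_def)
  note df = decomp_facts[OF w J pd]
  have u: "u permutes {1..n}" and v: "v permutes {1..n}" and wuv: "w = u \<circ> v" using df by auto
  have iJ: "i \<in> J" "i \<in> supp n u" using sJ by auto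
  have i: "1 \<le> i" "i < n" using iJ J by (auto simp: simple_gens_def)
  have npu: "\<not> pres u i" using supp_char[OF u] iJ by auto
  have pu: "pres u k" if "k \<in> J" "k \<noteq> i" for k
  proof -
    have "k \<notin> supp n u" using sJ that by auto
    moreover have "1 \<le> k" "k < n" using that J by (auto simp: simple_gens_def)
    ultimately show ?thesis using supp_char[OF u] by auto
  qed
  have pv: "pres v k" if "k \<notin> J" for k using df(5) that by blast
  have "i \<in> DL n v" using bpc iJ by auto
  then have dv: "inv v (Suc i) < inv v i" using DL_char[OF v i] by (simp add: DL_def)
  have rw: "\<not> w (Suc i) < w i" using nd DR_char[OF w i] i by (simp add: DR_def simple_gens_def)
  have um: "u i < u (Suc i)" using df(4) iJ by blast
  have sw: "supp n w = simple_gens n" and nfac: "\<not> (\<exists>w1 w2. w1 permutes {1..n} \<and> w2 permutes {1..n} \<and> w1 \<noteq> id \<and> w2 \<noteq> id \<and>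
          w = w1 \<circ> w2 \<and> supp n w1 \<inter> supp n w2 = {})"
    using assms(2) by (auto simp: bruhat_irreducible_def)
  show ?thesis
  proof
    fix j assume j: "j \<in> DL n w \<inter> DR n w"
    have jn: "1 \<le> j" "j < n" using j by (auto simp: DL_def simple_gens_def)
    have jl: "inv w (Suc j) < inv w j" using j DL_char[OF w jn] by (simp add: DL_def)
    have jr: "w (Suc j) < w j" using j DR_char[OF w jn] by (simp add: DR_def)
    consider (far) "Suc i < j \<or> Suc j < i" | (eq) "j = i" | (up) "j = Suc i" | (down) "Suc j = i"
      by linarith
    then show "sgen i \<circ> sgen j = sgen j \<circ> sgen i"
    proof cases
      case far
      then show ?thesis by (rule sgen_commute)
    next
      case eq
      then show ?thesis using rw jr by simp
    next
      case up
      have n2: "Suc (Suc i) \<le> n" using up jn by simp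
      have False
      proof (cases "Suc i \<in> J")
        case True
        have p1: "pres u (Suc i)" using pu True by simp
        show False
        proof (cases "i - 1 \<in> J")
          case True
          then have "1 \<le> i - 1" using J by (auto simp: simple_gens_def)
          then have "2 \<le> i" by simp
          have "pres u (i - 1)" using pu True i by auto
          then have "pres u i" using caseB[OF u \<open>2 \<le> i\<close> _ _ p1 um] n2 by simp
          then show False using npu by simp
        next
          case False
          then show False using caseC[OF u v w wuv i(1) n2 p1 pv[OF False] npu um] jl up by simp
        qed
      next
        case False
        have p2: "pres v (Suc i)" using pv False by simp
        show False
        proof (cases "i - 1 \<in> J")
          case True
          then have "1 \<le> i - 1" using J by (auto simp: simple_gens_def)
          then have i2: "2 \<le> i" by simp
          have "pres u (i - 1)" using pu True i by auto
          then have h: "\<And>P. 1 \<le> P \<Longrightarrow> P \<le> n \<Longrightarrow> w P < i \<Longrightarrow> P \<le> i"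
            using caseE[OF u v w wuv i2 n2 _ p2] jr up by simp
          show False using reducible[OF w i2 i(2) h sw] nfac by blast
        next
          case False
          then show False using caseA[OF u v wuv i pv[OF False] p2 um dv rw] by simp
        qed
      qed
      then show ?thesis ..
    next
      case down
      have i2: "2 \<le> i" using down jn by simp
      have jj: "j = i - 1" using down by simp
      have False
      proof (cases "i - 1 \<in> J")
        case True
        have p1: "pres u (i - 1)" using pu True i by auto
        show False
        proof (cases "Suc i \<in> J")
          case True
          then have "Suc i < n" using J by (auto simp: simple_gens_def)
          then have "pres u i" using caseB[OF u i2 _ p1 pu[OF True] um] by simp
          then show False using npu by simp
        next
          case False
          show False using caseF[OF u v w wuv i2 _ p1 pv[OF False] npu um] jl jj down i by simp
        qed
      next
        case False
        have p1: "pres v (i - 1)" using pv False by simp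
        show False
        proof (cases "Suc i \<in> J")
          case True
          then have n2: "Suc (Suc i) \<le> n" using J by (auto simp: simple_gens_def)
          have h: "\<And>P. 1 \<le> P \<Longrightarrow> P \<le> i \<Longrightarrow> w P \<le> Suc i"
            using caseD[OF u v wuv i2 n2 pu[OF True] p1] jr jj down by simp
          show False using reducible2[OF w i(1) n2 h sw] nfac by blast
        next
          case False
          then show False using caseA[OF u v wuv i p1 pv[OF False] um dv rw] by simp
        qed
      qed
      then show ?thesis ..
    qed
  qed
qed


end
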